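(* Let $\Omega\subset\mathbb{R}^2$, integers $N,M\ge 1$, a node deployment $\mathbf{P}=(p_1,\dots,p_{N+M})$, a cell partitioning $\mathbf{W}=(W_1,\dots,W_N)$ of $\Omega$ and a normalized flow matrix $\mathbf{S}$ be as described in the context, with flows $F_{i,j}=F_{i,j}(\mathbf{W},\mathbf{S})$ and AP power coefficients $g_n(\mathbf{P},\mathbf{S})$. Then $$\sum_{n=1}^{N}g_n(\mathbf{P},\mathbf{S})\,R_b\int_{W_n}f(\omega)\,d\omega=\sum_{i=1}^{N}\Big[\sum_{j=1}^{N+M}\beta_{i,j}\|p_i-p_j\|^2F_{i,j}(\mathbf{W},\mathbf{S})+\sum_{j=1}^{N}\rho_jF_{i,j}(\mathbf{W},\mathbf{S})\Big].$$
   Context: Let $\Omega\subset\mathbb{R}^2$ be a convex polygon (including its interior). Let $N,M\ge1$ be integers; $\mathcal{I_A}=\{1,\dots,N\}$ indexes access points (APs) and $\mathcal{I_F}=\{N+1,\dots,N+M\}$ indexes fusion centers (FCs). A node deployment is $\mathbf{P}=(p_1,\dots,p_{N+M})$ with $p_n\in\Omega$. Let $f:\Omega\to\mathbb{R}^+$ be continuous and differentiable and let $R_b>0$ be a constant. A cell partitioning $\mathbf{W}=(W_1,\dots,W_N)$ is a partition of $\Omega$ into Borel sets; write $v(W_n)=\int_{W_n}f(\omega)d\omega$. A normalized flow matrix $\mathbf{S}=[s_{i,j}]$, $i\in\mathcal{I_A}$, $j\in\mathcal{I_A}\cup\mathcal{I_F}$, satisfies $s_{i,j}\in[0,1]$,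 $\sum_{j=1}^{N+M}s_{i,j}=1$ for every $i\in\mathcal{I_A}$, and has no cycles: whenever $l_0,\dots,l_K$ satisfy $\prod_{k=1}^K s_{l_{k-1},l_k}>0$ then $s_{l_K,l_0}=0$ (in particular $s_{i,i}=0$). The flows $F_{i,j}(\mathbf{W},\mathbf{S})$ ($i\in\mathcal{I_A}$, $j\in\mathcal{I_A}\cup\mathcal{I_F}$) are the unique numbers with $F_{i,j}=s_{i,j}F_i$, where $F_i=\sum_{j=1}^{N+M}F_{i,j}$ satisfies $F_i=R_b v(W_i)+\sum_{j=1}^N F_{j,i}$. Positive constants $\eta_n$ ($n\in\mathcal{I_A}$), $\beta_{i,j}$ ($i\in\mathcal{I_A}$, $j\in\mathcal{I_A}\cup\mathcal{I_F}$) and nonnegative constants $\rho_n$ ($n\in\mathcal{I_A}$) are given. AP power coefficient: for $n\in\mathcal{I_A}$, consider all directed paths $L: n=l_0\to l_1\to\cdots\to l_J$ with $l_0,\dots,l_{J-1}\in\mathcal{I_A}$, $l_J\in\mathcal{I_F}$ and $\prod_{i=1}^J s_{l_{i-1},l_i}>0$; then $$g_n(\mathbf{P},\mathbf{S})=\sum_{L}\Big[\prod_{i=1}^{J}s_{l_{i-1},l_i}\Big(\sum_{j=1}^{J}\beta_{l_{j-1},l_j}\|p_{l_{j-1}}-p_{l_j}\|^2+\sum_{j=1}^{J-1}\rho_{l_j}\Big)\Big].$$ *)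

theory Defs
  imports "HOL-Analysis.Analysis"
begin

definition convex_polygon :: "(real^2) set \<Rightarrow> bool" where
  "convex_polygon \<Omega> \<longleftrightarrow> (\<exists>V. finite V \<and> \<Omega> = convex hull V \<and> interior \<Omega> \<noteq> {})"

definition cell_partition :: "nat \<Rightarrow> (real^2) set \<Rightarrow> (nat \<Rightarrow> (real^2) set) \<Rightarrow> bool" where
  "cell_partition N \<Omega> W \<longleftrightarrow>
     (\<forall>n\<in>{1..N}. W n \<in> sets borel) \<and>
     (\<forall>m\<in>{1..N}. \<forall>n\<in>{1..N}. m \<noteq> n \<longrightarrow> W m \<inter> W n = {}) \<and>
     (\<Union>n\<in>{1..N}. W n) = \<Omega>"

definition path_prod :: "(nat \<Rightarrow> nat \<Rightarrow> real) \<Rightarrow> nat list \<Rightarrow> real" where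
  "path_prod s l = (\<Prod>k\<in>{1..<length l}. s (l ! (k - 1)) (l ! k))"

text \<open>Normalized flow matrix: APs are 1..N, FCs are N+1..N+M.\<close>
definition normalized_flow_matrix :: "nat \<Rightarrow> nat \<Rightarrow> (nat \<Rightarrow> nat \<Rightarrow> real) \<Rightarrow> bool" where
  "normalized_flow_matrix N M s \<longleftrightarrow>
     (\<forall>i\<in>{1..N}. \<forall>j\<in>{1..N+M}. 0 \<le> s i j \<and> s i j \<le> 1) \<and>
     (\<forall>i\<in>{1..N}. (\<Sum>j=1..N+M. s i j) = 1) \<and>
     (\<forall>l. 2 \<le> length l \<and> set l \<subseteq> {1..N} \<and> path_prod s l > 0 \<longrightarrow> s (last l) (hd l) = 0)"

definition AP_FC_paths :: "nat \<Rightarrow> nat \<Rightarrow> (nat \<Rightarrow> nat \<Rightarrow> real) \<Rightarrow> nat \<Rightarrow> nat list set" where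
  "AP_FC_paths N M s n = {l. 2 \<le> length l \<and> hd l = n \<and>
       (\<forall>k < length l - 1. l ! k \<in> {1..N}) \<and> last l \<in> {N+1..N+M} \<and> path_prod s l > 0}"

definition power_coeff ::
  "nat \<Rightarrow> nat \<Rightarrow> (nat \<Rightarrow> nat \<Rightarrow> real) \<Rightarrow> (nat \<Rightarrow> nat \<Rightarrow> real) \<Rightarrow> (nat \<Rightarrow> real)
    \<Rightarrow> (nat \<Rightarrow> real^2) \<Rightarrow> nat \<Rightarrow> real" where
  "power_coeff N M s \<beta> \<rho> p n =
     (\<Sum>l\<in>AP_FC_paths N M s n.
        path_prod s l *
        ((\<Sum>j=1..length l - 1. \<beta> (l ! (j - 1)) (l ! j) * (norm (p (l ! (j - 1)) - p (l ! j)))\<^sup>2)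
         + (\<Sum>j=1..length l - 2. \<rho> (l ! j))))"

end

theory Submission
  imports Defs
begin

lemma pp_single: "path_prod s [a] = 1"
  by (simp add: path_prod_def)

lemma pp_Cons2: "path_prod s (a # b # l) = s a b * path_prod s (b # l)"
proof -
  have "path_prod s (a # b # l) = (\<Prod>k\<in>{1..<Suc (Suc (length l))}. s ((a#b#l) ! (k - 1)) ((a#b#l) ! k))"
    by (simp add: path_prod_def)
  also have "\<dots> = s a b * (\<Prod>k\<in>{Suc 1..<Suc (Suc (length l))}. s ((a#b#l) ! (k - 1)) ((a#b#l) ! k))"
    by (subst prod.atLeast_Suc_lessThan) auto
  also have "(\<Prod>k\<in>{Suc 1..<Suc (Suc (length l))}. s ((a#b#l) ! (k - 1)) ((a#b#l) ! k))
      = (\<Prod>k\<in>{1..<Suc (length l)}. s ((a#b#l) ! (Suc k - 1)) ((a#b#l) ! Suc k))"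
    by (rule prod.shift_bounds_Suc_ivl)
  also have "\<dots> = (\<Prod>k\<in>{1..<Suc (length l)}. s ((b#l) ! (k - 1)) ((b#l) ! k))"
    by (rule prod.cong) (auto simp: nth_Cons')
  also have "\<dots> = path_prod s (b # l)" by (simp add: path_prod_def)
  finally show ?thesis .
qed

lemma sumc_Cons:
  "(\<Sum>j=1..length (n#b#r) - 1. c ((n#b#r)!(j-1)) ((n#b#r)!j))
   = c n b + (\<Sum>j=1..length (b#r) - 1. c ((b#r)!(j-1)) ((b#r)!j))"
proof -
  have "(\<Sum>j=1..length (n#b#r) - 1. c ((n#b#r)!(j-1)) ((n#b#r)!j))
      = (\<Sum>j=1..Suc (length r). c ((n#b#r)!(j-1)) ((n#b#r)!j))" by simp
  also have "\<dots> = c n b + (\<Sum>j=Suc 1..Suc (length r). c ((n#b#r)!(j-1)) ((n#b#r)!j))"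
    by (subst sum.atLeast_Suc_atMost) auto
  also have "(\<Sum>j=Suc 1..Suc (length r). c ((n#b#r)!(j-1)) ((n#b#r)!j))
     = (\<Sum>j=1..length r. c ((n#b#r)!(Suc j-1)) ((n#b#r)!Suc j))"
    by (rule sum.shift_bounds_cl_Suc_ivl)
  also have "\<dots> = (\<Sum>j=1..length (b#r) - 1. c ((b#r)!(j-1)) ((b#r)!j))"
    by (rule sum.cong) (auto simp: nth_Cons')
  finally show ?thesis .
qed

lemma sumr_Cons:
  assumes "r \<noteq> []"
  shows "(\<Sum>j=1..length (n#b#r) - 2. (\<rho>::nat\<Rightarrow>real) ((n#b#r)!j))
   = \<rho> b + (\<Sum>j=1..length (b#r) - 2. \<rho> ((b#r)!j))"
proof -
  obtain m where m: "length r = Suc m" using assms by (cases r) auto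
  have "(\<Sum>j=1..length (n#b#r) - 2. \<rho> ((n#b#r)!j)) = (\<Sum>j=1..Suc m. \<rho> ((n#b#r)!j))"
    using m by simp
  also have "\<dots> = \<rho> b + (\<Sum>j=Suc 1..Suc m. \<rho> ((n#b#r)!j))"
    by (subst sum.atLeast_Suc_atMost) auto
  also have "(\<Sum>j=Suc 1..Suc m. \<rho> ((n#b#r)!j)) = (\<Sum>j=1..m. \<rho> ((n#b#r)!Suc j))"
    by (rule sum.shift_bounds_cl_Suc_ivl)
  also have "\<dots> = (\<Sum>j=1..length (b#r) - 2. \<rho> ((b#r)!j))"
    using m by (intro sum.cong) (auto simp: nth_Cons')
  finally show ?thesis .
qed

context
  fixes N M :: nat and s :: "nat \<Rightarrow> nat \<Rightarrow> real"
  assumes nfm: "normalized_flow_matrix N M s"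
begin

definition "E = {(i,j). i \<in> {1..N} \<and> j \<in> {1..N} \<and> s i j > 0}"

lemma path_of_trancl:
  assumes "(x,y) \<in> E\<^sup>+"
  shows "\<exists>l. 2 \<le> length l \<and> set l \<subseteq> {1..N} \<and> hd l = x \<and> last l = y \<and> path_prod s l > 0"
  using assms
proof (induction rule: converse_trancl_induct)
  case (base u)
  then show ?case
    by (intro exI[of _ "[u, y]"]) (auto simp: E_def pp_Cons2 pp_single)
next
  case (step u z)
  then obtain l where l: "2 \<le> length l" "set l \<subseteq> {1..N}" "hd l = z" "last l = y" "path_prod s l > 0"
    by blast
  then obtain r where r: "l = z # r" "r \<noteq> []" by (cases l) force+
  show ?case
    using step(1) l r
    by (intro exI[of _ "u # l"]) (auto simp: E_def pp_Cons2)
qed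

lemma acyc: "acyclic E"
  unfolding acyclic_def
proof
  fix x
  show "(x,x) \<notin> E\<^sup>+"
  proof
    assume "(x,x) \<in> E\<^sup>+"
    then obtain z where xz: "(x,z) \<in> E" and zx: "(z,x) \<in> E\<^sup>*"
      using tranclD by metis
    have cyc: "\<And>l. 2 \<le> length l \<Longrightarrow> set l \<subseteq> {1..N} \<Longrightarrow> path_prod s l > 0 \<Longrightarrow> s (last l) (hd l) = 0"
      using nfm unfolding normalized_flow_matrix_def by blast
    show False
    proof (cases "z = x")
      case True
      then have "s x x > 0" "x \<in> {1..N}" using xz by (auto simp: E_def)
      then show False using cyc[of "[x,x]"] by (simp add: pp_Cons2 pp_single)
    next
      case False
      then have "(z,x) \<in> E\<^sup>+" using zx by (meson rtranclD)
      then obtain l where "2 \<le> length l" "set l \<subseteq> {1..N}" "hd l = z" "last l = x" "path_prod s l > 0"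
        using path_of_trancl by blast
      then have "s x z = 0" using cyc by blast
      then show False using xz by (simp add: E_def)
    qed
  qed
qed

lemma wfE: "wf (E\<inverse>)"
proof (rule finite_acyclic_wf_converse)
  show "finite E" by (rule finite_subset[of _ "{1..N} \<times> {1..N}"]) (auto simp: E_def)
  show "acyclic E" by (rule acyc)
qed


lemma s_nonneg: "i \<in> {1..N} \<Longrightarrow> j \<in> {1..N+M} \<Longrightarrow> 0 \<le> s i j"
  using nfm unfolding normalized_flow_matrix_def by blast

lemma P_decomp:
  assumes n: "n \<in> {1..N}"
  shows "AP_FC_paths N M s n = (\<lambda>k. [n,k]) ` {k\<in>{N+1..N+M}. s n k > 0}
     \<union> (\<Union>k\<in>{k\<in>{1..N}. s n k > 0}. Cons n ` AP_FC_paths N M s k)"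
proof (rule set_eqI, rule iffI)
  fix l assume l: "l \<in> AP_FC_paths N M s n"
  then have len: "2 \<le> length l" and hd: "hd l = n" and inner: "\<forall>k < length l - 1. l ! k \<in> {1..N}"
    and lst: "last l \<in> {N+1..N+M}" and pos: "path_prod s l > 0"
    by (auto simp: AP_FC_paths_def)
  obtain b r where lr: "l = n # b # r" using len hd by (cases l; cases "tl l") auto
  show "l \<in> (\<lambda>k. [n,k]) ` {k\<in>{N+1..N+M}. s n k > 0}
     \<union> (\<Union>k\<in>{k\<in>{1..N}. s n k > 0}. Cons n ` AP_FC_paths N M s k)"
  proof (cases "r = []")
    case True
    then show ?thesis using lr lst pos by (auto simp: pp_Cons2 pp_single)
  next
    case False
    have bV: "b \<in> {1..N}" using inner[rule_format, of 1] lr False by auto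
    have pos2: "s n b * path_prod s (b # r) > 0" using pos lr by (simp add: pp_Cons2)
    have "0 \<le> s n b" using s_nonneg[OF n] bV by auto
    then have sp: "s n b > 0" and pp: "path_prod s (b # r) > 0" using pos2
      by (auto simp: zero_less_mult_iff)
    have "b # r \<in> AP_FC_paths N M s b"
      unfolding AP_FC_paths_def
    proof (intro CollectI conjI allI impI)
      show "2 \<le> length (b # r)" using False by (cases r) auto
      show "hd (b # r) = b" by simp
      fix k assume "k < length (b # r) - 1"
      then show "(b # r) ! k \<in> {1..N}" using inner[rule_format, of "Suc k"] lr by auto
    next
      show "last (b # r) \<in> {N+1..N+M}" using lst lr by simp
      show "path_prod s (b # r) > 0" by (rule pp)
    qed
    then show ?thesis using lr bV sp by blast
  qed
next
  fix l assume "l \<in> (\<lambda>k. [n,k]) ` {k\<in>{N+1..N+M}. s n k > 0}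
     \<union> (\<Union>k\<in>{k\<in>{1..N}. s n k > 0}. Cons n ` AP_FC_paths N M s k)"
  then consider (a) k where "k \<in> {N+1..N+M}" "s n k > 0" "l = [n,k]"
    | (b) k l' where "k \<in> {1..N}" "s n k > 0" "l' \<in> AP_FC_paths N M s k" "l = n # l'"
    by blast
  then show "l \<in> AP_FC_paths N M s n"
  proof cases
    case a
    then show ?thesis using n by (auto simp: AP_FC_paths_def pp_Cons2 pp_single nth_Cons')
  next
    case b
    then have len: "2 \<le> length l'" and hd: "hd l' = k" and inner: "\<forall>j < length l' - 1. l' ! j \<in> {1..N}"
      and lst: "last l' \<in> {N+1..N+M}" and pos: "path_prod s l' > 0"
      by (auto simp: AP_FC_paths_def)
    obtain r where lr: "l' = k # r" "r \<noteq> []" using len hd by (cases l') force+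
    show ?thesis
      unfolding AP_FC_paths_def
    proof (intro CollectI conjI allI impI)
      show "2 \<le> length l" using b len by simp
      show "hd l = n" using b by simp
      fix j assume j: "j < length l - 1"
      show "l ! j \<in> {1..N}"
      proof (cases j)
        case 0 then show ?thesis using b n by simp
      next
        case (Suc i) then show ?thesis using inner j b by auto
      qed
    next
      show "last l \<in> {N+1..N+M}" using b lst lr by simp
      show "path_prod s l > 0" using b lr pos by (simp add: pp_Cons2)
    qed
  qed
qed

lemma P_hd: "l \<in> AP_FC_paths N M s k \<Longrightarrow> hd l = k"
  by (simp add: AP_FC_paths_def)

lemma P_len: "l \<in> AP_FC_paths N M s k \<Longrightarrow> 2 \<le> length l"
  by (simp add: AP_FC_paths_def)

lemma P_sum:
  fixes h :: "nat list \<Rightarrow> real"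
  assumes n: "n \<in> {1..N}"
    and fin: "\<And>k. k \<in> {1..N} \<Longrightarrow> s n k > 0 \<Longrightarrow> finite (AP_FC_paths N M s k)"
  shows "finite (AP_FC_paths N M s n)"
    "sum h (AP_FC_paths N M s n) = (\<Sum>k\<in>{k\<in>{N+1..N+M}. s n k > 0}. h [n,k])
       + (\<Sum>k\<in>{k\<in>{1..N}. s n k > 0}. \<Sum>l\<in>AP_FC_paths N M s k. h (n # l))"
proof -
  let ?A = "(\<lambda>k. [n,k]) ` {k\<in>{N+1..N+M}. s n k > 0}"
  let ?B = "\<Union>k\<in>{k\<in>{1..N}. s n k > 0}. Cons n ` AP_FC_paths N M s k"
  have fA: "finite ?A" by simp
  have fB: "finite ?B" using fin by auto
  show "finite (AP_FC_paths N M s n)" using P_decomp[OF n] fA fB by simp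
  have disj: "?A \<inter> ?B = {}" using P_len by fastforce
  have "sum h (AP_FC_paths N M s n) = sum h ?A + sum h ?B"
    using P_decomp[OF n] fA fB disj by (simp add: sum.union_disjoint)
  also have "sum h ?A = (\<Sum>k\<in>{k\<in>{N+1..N+M}. s n k > 0}. h [n,k])"
    by (subst sum.reindex) (auto simp: inj_on_def)
  also have "sum h ?B = (\<Sum>k\<in>{k\<in>{1..N}. s n k > 0}. sum h (Cons n ` AP_FC_paths N M s k))"
    proof (rule sum.UNION_disjoint)
    show "finite {k\<in>{1..N}. s n k > 0}" by simp
    show "\<forall>i\<in>{k\<in>{1..N}. s n k > 0}. finite (Cons n ` AP_FC_paths N M s i)" using fin by auto
    show "\<forall>i\<in>{k\<in>{1..N}. s n k > 0}. \<forall>j\<in>{k\<in>{1..N}. s n k > 0}. i \<noteq> j \<longrightarrow>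
       Cons n ` AP_FC_paths N M s i \<inter> Cons n ` AP_FC_paths N M s j = {}"
      by (auto dest: P_hd)
  qed
  also have "\<dots> = (\<Sum>k\<in>{k\<in>{1..N}. s n k > 0}. \<Sum>l\<in>AP_FC_paths N M s k. h (n # l))"
    by (rule sum.cong) (auto simp: sum.reindex)
  finally show "sum h (AP_FC_paths N M s n) = (\<Sum>k\<in>{k\<in>{N+1..N+M}. s n k > 0}. h [n,k])
       + (\<Sum>k\<in>{k\<in>{1..N}. s n k > 0}. \<Sum>l\<in>AP_FC_paths N M s k. h (n # l))" .
qed


lemma filt:
  assumes n: "n \<in> {1..N}" and A: "A \<subseteq> {1..N+M}"
  shows "(\<Sum>k\<in>{k\<in>A. s n k > 0}. s n k * g k) = (\<Sum>k\<in>A. s n k * g k)"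
proof (rule sum.mono_neutral_left)
  show "finite A" using A finite_subset by blast
  show "{k\<in>A. s n k > 0} \<subseteq> A" by auto
  show "\<forall>i\<in>A - {k \<in> A. 0 < s n k}. s n i * g i = 0"
  proof
    fix i assume "i \<in> A - {k \<in> A. 0 < s n k}"
    then have "i \<in> {1..N+M}" "\<not> s n i > 0" using A by auto
    then have "s n i = 0" using s_nonneg[OF n] by force
    then show "s n i * g i = 0" by simp
  qed
qed

lemma split_sum: "(\<Sum>k=1..N+M. g k) = (\<Sum>k=1..N. g k) + (\<Sum>k=N+1..N+M. (g k::real))"
proof -
  have "{1..N+M} = {1..N} \<union> {N+1..N+M}" by auto
  then show ?thesis by (simp add: sum.union_disjoint)
qed

definition cost :: "(nat \<Rightarrow> nat \<Rightarrow> real) \<Rightarrow> (nat \<Rightarrow> real) \<Rightarrow> (nat \<Rightarrow> real^2) \<Rightarrow> nat list \<Rightarrow> real" where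
  "cost \<beta> \<rho> p l = (\<Sum>j=1..length l - 1. \<beta> (l ! (j - 1)) (l ! j) * (norm (p (l ! (j - 1)) - p (l ! j)))\<^sup>2)
         + (\<Sum>j=1..length l - 2. \<rho> (l ! j))"

lemma cost_two: "cost \<beta> \<rho> p [n,k] = \<beta> n k * (norm (p n - p k))\<^sup>2"
  by (simp add: cost_def)

lemma cost_Cons: "r \<noteq> [] \<Longrightarrow> cost \<beta> \<rho> p (n # k # r) = \<beta> n k * (norm (p n - p k))\<^sup>2 + \<rho> k + cost \<beta> \<rho> p (k # r)"
  unfolding cost_def
  using sumc_Cons[of "\<lambda>a b. \<beta> a b * (norm (p a - p b))\<^sup>2" n k r] sumr_Cons[of r \<rho> n k]
  by simp

lemma pc_cost: "power_coeff N M s \<beta> \<rho> p n = (\<Sum>l\<in>AP_FC_paths N M s n. path_prod s l * cost \<beta> \<rho> p l)"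
  by (simp add: power_coeff_def cost_def)

lemma main_rec:
  assumes "n \<in> {1..N}"
  shows "finite (AP_FC_paths N M s n) \<and> (\<Sum>l\<in>AP_FC_paths N M s n. path_prod s l) = 1 \<and>
    power_coeff N M s \<beta> \<rho> p n = (\<Sum>k=1..N+M. s n k * (\<beta> n k * (norm (p n - p k))\<^sup>2))
        + (\<Sum>k=1..N. s n k * (\<rho> k + power_coeff N M s \<beta> \<rho> p k))"
  using assms
proof (induction n rule: wf_induct_rule[OF wfE])
  case (1 n)
  let ?P = "AP_FC_paths N M s"
  let ?G = "power_coeff N M s \<beta> \<rho> p"
  let ?c = "\<lambda>a b. \<beta> a b * (norm (p a - p b))\<^sup>2"
  have n: "n \<in> {1..N}" by fact
  have IH: "\<And>k. k \<in> {1..N} \<Longrightarrow> s n k > 0 \<Longrightarrow> finite (?P k) \<and> (\<Sum>l\<in>?P k. path_prod s l) = 1 \<and>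
    ?G k = (\<Sum>j=1..N+M. s k j * ?c k j) + (\<Sum>j=1..N. s k j * (\<rho> j + ?G j))"
    using 1 n by (auto simp: E_def)
  have fin: "\<And>k. k \<in> {1..N} \<Longrightarrow> s n k > 0 \<Longrightarrow> finite (?P k)" using IH by blast
  have Q: "\<And>k. k \<in> {1..N} \<Longrightarrow> s n k > 0 \<Longrightarrow> (\<Sum>l\<in>?P k. path_prod s l) = 1" using IH by blast
  have form: "\<And>k l. l \<in> ?P k \<Longrightarrow> \<exists>r. l = k # r \<and> r \<noteq> []"
  proof -
    fix k l assume "l \<in> ?P k"
    then have "2 \<le> length l" "hd l = k" using P_hd P_len by auto
    then show "\<exists>r. l = k # r \<and> r \<noteq> []" by (cases l) force+
  qed
  have ppC: "\<And>k l. l \<in> ?P k \<Longrightarrow> path_prod s (n # l) = s n k * path_prod s l"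
    using form pp_Cons2 by blast
  have costC: "\<And>k l. l \<in> ?P k \<Longrightarrow> cost \<beta> \<rho> p (n # l) = ?c n k + \<rho> k + cost \<beta> \<rho> p l"
    using form cost_Cons by blast
  have finn: "finite (?P n)" using P_sum(1)[OF n fin] .
  have "(\<Sum>l\<in>?P n. path_prod s l) = (\<Sum>k\<in>{k\<in>{N+1..N+M}. s n k > 0}. s n k * 1)
       + (\<Sum>k\<in>{k\<in>{1..N}. s n k > 0}. s n k * 1)"
  proof -
    have "(\<Sum>l\<in>?P n. path_prod s l) = (\<Sum>k\<in>{k\<in>{N+1..N+M}. s n k > 0}. path_prod s [n,k])
       + (\<Sum>k\<in>{k\<in>{1..N}. s n k > 0}. \<Sum>l\<in>?P k. path_prod s (n # l))"
      by (rule P_sum(2)[OF n fin])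
    also have "(\<Sum>k\<in>{k\<in>{1..N}. s n k > 0}. \<Sum>l\<in>?P k. path_prod s (n # l))
        = (\<Sum>k\<in>{k\<in>{1..N}. s n k > 0}. s n k * 1)"
    proof (rule sum.cong)
      fix k assume k: "k \<in> {k\<in>{1..N}. s n k > 0}"
      have "(\<Sum>l\<in>?P k. path_prod s (n # l)) = (\<Sum>l\<in>?P k. s n k * path_prod s l)"
        by (rule sum.cong) (auto simp: ppC)
      also have "\<dots> = s n k * 1" using Q k by (simp add: sum_distrib_left[symmetric])
      finally show "(\<Sum>l\<in>?P k. path_prod s (n # l)) = s n k * 1" .
    qed simp
    finally show ?thesis by (simp add: pp_Cons2 pp_single)
  qed
  also have "\<dots> = (\<Sum>k=N+1..N+M. s n k * 1) + (\<Sum>k=1..N. s n k * 1)"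
    using filt[OF n, of "{N+1..N+M}" "\<lambda>_. 1"] filt[OF n, of "{1..N}" "\<lambda>_. 1"] by simp
  also have "\<dots> = (\<Sum>k=1..N+M. s n k)" using split_sum[of "s n"] by simp
  also have "\<dots> = 1" using nfm n unfolding normalized_flow_matrix_def by blast
  finally have Qn: "(\<Sum>l\<in>?P n. path_prod s l) = 1" .
  have "?G n = (\<Sum>k\<in>{k\<in>{N+1..N+M}. s n k > 0}. s n k * ?c n k)
       + (\<Sum>k\<in>{k\<in>{1..N}. s n k > 0}. s n k * (?c n k + (\<rho> k + ?G k)))"
  proof -
    have "?G n = (\<Sum>k\<in>{k\<in>{N+1..N+M}. s n k > 0}. path_prod s [n,k] * cost \<beta> \<rho> p [n,k])
       + (\<Sum>k\<in>{k\<in>{1..N}. s n k > 0}. \<Sum>l\<in>?P k. path_prod s (n # l) * cost \<beta> \<rho> p (n # l))"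
      unfolding pc_cost by (rule P_sum(2)[OF n fin])
    also have "(\<Sum>k\<in>{k\<in>{1..N}. s n k > 0}. \<Sum>l\<in>?P k. path_prod s (n # l) * cost \<beta> \<rho> p (n # l))
        = (\<Sum>k\<in>{k\<in>{1..N}. s n k > 0}. s n k * (?c n k + (\<rho> k + ?G k)))"
    proof (rule sum.cong)
      fix k assume k: "k \<in> {k\<in>{1..N}. s n k > 0}"
      have "(\<Sum>l\<in>?P k. path_prod s (n # l) * cost \<beta> \<rho> p (n # l))
          = (\<Sum>l\<in>?P k. s n k * ((?c n k + \<rho> k) * path_prod s l + path_prod s l * cost \<beta> \<rho> p l))"
        by (rule sum.cong) (auto simp: ppC costC algebra_simps)
      also have "\<dots> = s n k * ((?c n k + \<rho> k) * (\<Sum>l\<in>?P k. path_prod s l) + ?G k)"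
        by (simp add: sum_distrib_left[symmetric] sum.distrib pc_cost)
      also have "\<dots> = s n k * (?c n k + (\<rho> k + ?G k))" using Q k by simp
      finally show "(\<Sum>l\<in>?P k. path_prod s (n # l) * cost \<beta> \<rho> p (n # l)) = s n k * (?c n k + (\<rho> k + ?G k))" .
    qed simp
    finally show ?thesis by (simp add: pp_Cons2 pp_single cost_two)
  qed
  also have "\<dots> = (\<Sum>k=N+1..N+M. s n k * ?c n k) + (\<Sum>k=1..N. s n k * (?c n k + (\<rho> k + ?G k)))"
    using filt[OF n, of "{N+1..N+M}" "?c n"] filt[OF n, of "{1..N}" "\<lambda>k. ?c n k + (\<rho> k + ?G k)"] by simp
  also have "\<dots> = (\<Sum>k=1..N+M. s n k * ?c n k) + (\<Sum>k=1..N. s n k * (\<rho> k + ?G k))"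
    using split_sum[of "\<lambda>k. s n k * ?c n k"] by (simp add: algebra_simps sum.distrib)
  finally show ?case using finn Qn by blast
qed

end
theorem lemma1:
  fixes N M :: nat and \<Omega> :: "(real^2) set" and f :: "real^2 \<Rightarrow> real" and R_b :: real
    and p :: "nat \<Rightarrow> real^2" and W :: "nat \<Rightarrow> (real^2) set"
    and s F \<beta> :: "nat \<Rightarrow> nat \<Rightarrow> real" and \<rho> :: "nat \<Rightarrow> real"
  assumes "convex_polygon \<Omega>"
    and "1 \<le> N" and "1 \<le> M"
    and "\<forall>n\<in>{1..N+M}. p n \<in> \<Omega>"
    and "continuous_on \<Omega> f" and "f differentiable_on \<Omega>" and "\<forall>x\<in>\<Omega>. f x > 0"
    and "R_b > 0"
    and "cell_partition N \<Omega> W"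
    and "normalized_flow_matrix N M s"
    and "\<forall>i\<in>{1..N}. \<forall>j\<in>{1..N+M}. \<beta> i j > 0"
    and "\<forall>n\<in>{1..N}. \<rho> n \<ge> 0"
    and flow1: "\<forall>i\<in>{1..N}. \<forall>j\<in>{1..N+M}. F i j = s i j * (\<Sum>k=1..N+M. F i k)"
    and flow2: "\<forall>i\<in>{1..N}. (\<Sum>k=1..N+M. F i k) = R_b * integral (W i) f + (\<Sum>j=1..N. F j i)"
  shows "(\<Sum>n=1..N. power_coeff N M s \<beta> \<rho> p n * (R_b * integral (W n) f)) =
         (\<Sum>i=1..N. (\<Sum>j=1..N+M. \<beta> i j * (norm (p i - p j))\<^sup>2 * F i j)
                   + (\<Sum>j=1..N. \<rho> j * F i j))"
proof -
  let ?G = "power_coeff N M s \<beta> \<rho> p"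
  let ?c = "\<lambda>a b. \<beta> a b * (norm (p a - p b))\<^sup>2"
  let ?Ft = "\<lambda>i. \<Sum>k=1..N+M. F i k"
  let ?a = "\<lambda>n. R_b * integral (W n) f"
  have nfm: "normalized_flow_matrix N M s" by fact
  have rec: "\<And>n. n \<in> {1..N} \<Longrightarrow> ?G n = (\<Sum>k=1..N+M. s n k * ?c n k) + (\<Sum>k=1..N. s n k * (\<rho> k + ?G k))"
    using main_rec[OF nfm] by blast
  have a: "\<And>n. n \<in> {1..N} \<Longrightarrow> ?a n = ?Ft n - (\<Sum>j=1..N. F j n)"
    using flow2 by force
  have L: "(\<Sum>n=1..N. ?G n * ?a n) = (\<Sum>n=1..N. ?G n * ?Ft n) - (\<Sum>n=1..N. \<Sum>j=1..N. F j n * ?G n)"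
  proof -
    have "(\<Sum>n=1..N. ?G n * ?a n) = (\<Sum>n=1..N. ?G n * ?Ft n - (\<Sum>j=1..N. F j n * ?G n))"
    proof (rule sum.cong)
      fix n assume n: "n \<in> {1..N}"
      have "?G n * ?a n = ?G n * ?Ft n - ?G n * (\<Sum>j=1..N. F j n)"
        by (simp only: a[OF n] right_diff_distrib)
      also have "?G n * (\<Sum>j=1..N. F j n) = (\<Sum>j=1..N. F j n * ?G n)"
        by (simp add: sum_distrib_left mult.commute)
      finally show "?G n * ?a n = ?G n * ?Ft n - (\<Sum>j=1..N. F j n * ?G n)" .
    qed simp
    then show ?thesis by (simp only: sum_subtractf)
  qed
  have S1: "(\<Sum>n=1..N. ?G n * ?Ft n) = (\<Sum>n=1..N. (\<Sum>k=1..N+M. ?c n k * F n k)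
        + (\<Sum>k=1..N. \<rho> k * F n k)) + (\<Sum>n=1..N. \<Sum>k=1..N. F n k * ?G k)"
  proof -
    have "(\<Sum>n=1..N. ?G n * ?Ft n) = (\<Sum>n=1..N. ((\<Sum>k=1..N+M. ?c n k * F n k)
        + (\<Sum>k=1..N. \<rho> k * F n k)) + (\<Sum>k=1..N. F n k * ?G k))"
    proof (rule sum.cong)
      fix n assume n: "n \<in> {1..N}"
      have F1: "\<And>k. k \<in> {1..N+M} \<Longrightarrow> F n k = s n k * ?Ft n" using flow1 n by blast
      have "?G n * ?Ft n = (\<Sum>k=1..N+M. s n k * ?c n k) * ?Ft n + (\<Sum>k=1..N. s n k * (\<rho> k + ?G k)) * ?Ft n"
        by (simp only: rec[OF n] distrib_right)
      also have "\<dots> = (\<Sum>k=1..N+M. s n k * ?c n k * ?Ft n) + (\<Sum>k=1..N. s n k * (\<rho> k + ?G k) * ?Ft n)"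
        by (simp only: sum_distrib_right)
      also have "(\<Sum>k=1..N+M. s n k * ?c n k * ?Ft n) = (\<Sum>k=1..N+M. ?c n k * F n k)"
      proof (rule sum.cong)
        fix k assume "k \<in> {1..N+M}"
        from F1[OF this] show "s n k * ?c n k * ?Ft n = ?c n k * F n k" by (simp add: algebra_simps)
      qed simp
      also have "(\<Sum>k=1..N. s n k * (\<rho> k + ?G k) * ?Ft n) = (\<Sum>k=1..N. \<rho> k * F n k + F n k * ?G k)"
      proof (rule sum.cong)
        fix k assume "k \<in> {1..N}"
        then have "k \<in> {1..N+M}" by simp
        from F1[OF this] show "s n k * (\<rho> k + ?G k) * ?Ft n = \<rho> k * F n k + F n k * ?G k"
          by (simp add: algebra_simps)
      qed simp
      also have "\<dots> = (\<Sum>k=1..N. \<rho> k * F n k) + (\<Sum>k=1..N. F n k * ?G k)"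
        by (rule sum.distrib)
      finally show "?G n * ?Ft n = ((\<Sum>k=1..N+M. ?c n k * F n k)
        + (\<Sum>k=1..N. \<rho> k * F n k)) + (\<Sum>k=1..N. F n k * ?G k)"
        by (simp only: add.assoc)
    qed simp
    then show ?thesis by (simp only: sum.distrib)
  qed
  have S2: "(\<Sum>n=1..N. \<Sum>k=1..N. F n k * ?G k) = (\<Sum>n=1..N. \<Sum>j=1..N. F j n * ?G n)"
    by (rule sum.swap)
  show ?thesis using L S1 S2 by linarith
qed

end
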